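(* Let $0<\alpha<1$ and let $\lambda>0$, $k>0$, $m>0$, $h>0$, $C<D$ (with $D>0$) be constants. Let $$K(\eta)=\eta\left[1-W\!\left(-\eta,-\tfrac{\alpha}{2},1\right)+\frac{m}{h\lambda\Gamma(1-\alpha/2)}\right]\frac{1}{M_{\alpha/2}(\eta)},\quad \eta>0,$$ and let $\tilde\eta$ be the unique positive solution of $K(\eta)=\frac{k}{\lambda^2}\frac{\Gamma(1-\frac{\alpha}{2})}{\Gamma(1+\frac{\alpha}{2})}(D-C)$. Set $$B=D-(D-C)\frac{m}{h\lambda\Gamma(1-\alpha/2)}\cdot\frac{1}{1-W\!\left(-\tilde\eta,-\frac{\alpha}{2},1\right)+\frac{m}{h\lambda\Gamma(1-\alpha/2)}}.$$ Consider problem (P1): find $u,s$ with $D^{\alpha}_t u=\lambda^2u_{xx}$ for $0<x<s(t)$, $t>0$; $u(0,t)=B$; $u(s(t),t)=C$; $D^{\alpha}s(t)=-k u_x(s(t),t)$ for $t>0$; $s(0)=0$. Consider problem (P3): find $u,s$ with $D^{\alpha}_t u=\lambda^2u_{xx}$ for $0<x<s(t)$, $t>0$; $m\,u_x(0,t)=\frac{h}{t^{\alpha/2}}(u(0,t)-D)$; $u(s(t),t)=C$; $D^{\alpha}s(t)=-k u_x(s(t),t)$ for $t>0$; $s(0)=0$ (with the same $C$). Then problems (P1) and (P3) are equivalent: the solution of (P1) $$u_1(x,t)=B+\frac{C-B}{1-W(-\tilde\xi,-\frac{\alpha}{2},1)}\left[1-W\!\left(-\frac{x}{\lambda t^{\alpha/2}},-\frac{\alpha}{2},1\right)\right],\quad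 s_1(t)=\lambda\tilde\xi t^{\alpha/2},$$ where $\tilde\xi$ is the unique positive solution of $H(\xi)=-\frac{k}{\lambda^2}\frac{\Gamma(1-\frac{\alpha}{2})}{\Gamma(1+\frac{\alpha}{2})}(C-B)$ with $H(\xi)=\xi\left[1-W(-\xi,-\frac{\alpha}{2},1)\right]\frac{1}{M_{\alpha/2}(\xi)}$, coincides with the solution of (P3) $$u_3(x,t)=D-\frac{(D-C)\left[1-W\!\left(-\frac{x}{\lambda t^{\alpha/2}},-\frac{\alpha}{2},1\right)+\frac{m}{h\lambda\Gamma(1-\alpha/2)}\right]}{1-W\!\left(-\tilde\eta,-\frac{\alpha}{2},1\right)+\frac{m}{h\lambda\Gamma(1-\alpha/2)}},\quad s_3(t)=\lambda\tilde\eta t^{\alpha/2};$$ that is, $\tilde\xi=\tilde\eta$, $s_1=s_3$ and $u_1=u_3$.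
   Context: For $0<\alpha<1$, the Caputo fractional derivative of a differentiable $f$ is $D^{\alpha}f(t)=\frac{1}{\Gamma(1-\alpha)}\int_0^t (t-\tau)^{-\alpha}f'(\tau)\,d\tau$; $D^{\alpha}_t u(x,t)$ denotes it in the variable $t$. The Wright function is $W(z,a,b)=\sum_{n\ge0}\frac{z^n}{n!\,\Gamma(an+b)}$ ($a>-1$), and the Mainardi function is $M_\nu(z)=W(-z,-\nu,1-\nu)$. *)

theory Defs
  imports "HOL-Analysis.Analysis"
begin

text \<open>Wright function W(z,a,b) = sum_n z^n / (n! Gamma(a n + b)), with the usual
  convention 1/Gamma = 0 at the poles (rGamma is the reciprocal Gamma function).\<close>
definition Wright :: "real \<Rightarrow> real \<Rightarrow> real \<Rightarrow> real" where
  "Wright z a b = (\<Sum>n. z ^ n / fact n * rGamma (a * real n + b))"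

definition Mainardi :: "real \<Rightarrow> real \<Rightarrow> real" where
  "Mainardi \<nu> z = Wright (- z) (- \<nu>) (1 - \<nu>)"

end

theory Submission imports Defs begin

definition tm :: "real \<Rightarrow> real \<Rightarrow> nat \<Rightarrow> real \<Rightarrow> real" where
  "tm \<nu> x n r = (-x)^n / fact n * (sin (pi*\<nu>*n) / pi) * (r powr (\<nu>*n - 1) / exp r)"

lemma tm_integral:
  assumes "0 < \<nu>"
  shows "(tm \<nu> x n has_integral ((-x)^n / fact n * (sin (pi*\<nu>*n) / pi) * Gamma (\<nu>*n))) {0..}"
proof (cases "n = 0")
  case True
  then have "tm \<nu> x n = (\<lambda>r. 0)" by (simp add: tm_def fun_eq_iff)
  then show ?thesis using True by simp
next
  case False
  then have "\<nu> * n > 0" using assms by simp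
  from has_integral_mult_right[OF Gamma_integral_real[OF this], of "(-x)^n / fact n * (sin (pi*\<nu>*n) / pi)"]
  show ?thesis unfolding tm_def by (simp add: mult.assoc)
qed

lemma tm_pointwise:
  assumes "0 \<le> r"
  shows "(\<lambda>N. \<Sum>n<N. tm \<nu> x n r) \<longlonglongrightarrow>
     - (exp (- r - x * cos (pi*\<nu>) * r powr \<nu>) * sin (x * sin (pi*\<nu>) * r powr \<nu>) / r) / pi"
proof (cases "r = 0")
  case True
  then show ?thesis by (simp add: tm_def)
next
  case False
  with assms have r: "r > 0" by simp
  define y where "y = x * r powr \<nu>"
  define w where "w = complex_of_real (-y) * cis (pi*\<nu>)"
  have "(\<lambda>n. w^n /\<^sub>R fact n) sums exp w" by (rule exp_converges)
  from sums_Im[OF this] have S0: "(\<lambda>n. Im (w^n /\<^sub>R fact n)) sums (exp (- y * cos (pi*\<nu>)) * sin (- y * sin (pi*\<nu>)))"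
    by (simp add: w_def Im_exp)
  have "Im (w^n /\<^sub>R fact n) = (-y)^n * sin (real n * (pi*\<nu>)) / fact n" for n
  proof -
    have "w^n = complex_of_real ((-y)^n) * cis (real n * (pi*\<nu>))"
      unfolding w_def by (simp only: power_mult_distrib of_real_power of_real_minus) (metis Complex.DeMoivre)
    then show ?thesis by (simp add: divide_inverse mult.commute)
  qed
  with S0 have "(\<lambda>n. (-y)^n * sin (real n * (pi*\<nu>)) / fact n) sums (exp (- y * cos (pi*\<nu>)) * sin (- y * sin (pi*\<nu>)))"
    by simp
  from sums_mult2[OF this, of "1 / (pi * r * exp r)"]
  have S: "(\<lambda>n. (-y)^n * sin (real n * (pi*\<nu>)) / fact n * (1 / (pi * r * exp r))) sums
      (exp (- y * cos (pi*\<nu>)) * sin (- y * sin (pi*\<nu>)) * (1 / (pi * r * exp r)))" .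
  have eq: "(-y)^n * sin (real n * (pi*\<nu>)) / fact n * (1 / (pi * r * exp r)) = tm \<nu> x n r" for n
  proof -
    have "r powr (\<nu>*n - 1) = (r powr \<nu>)^n / r"
      using r by (simp add: powr_diff powr_powr[symmetric] powr_realpow)
    moreover have "(- (x * r powr \<nu>)) ^ n = (- x) ^ n * (r powr \<nu>) ^ n"
      by (metis minus_mult_left power_mult_distrib)
    ultimately show ?thesis unfolding tm_def y_def
      by (simp add: field_simps mult.commute mult.left_commute)
  qed
  have eq2: "exp (- y * cos (pi*\<nu>)) * sin (- y * sin (pi*\<nu>)) * (1 / (pi * r * exp r)) =
     - (exp (- r - x * cos (pi*\<nu>) * r powr \<nu>) * sin (x * sin (pi*\<nu>) * r powr \<nu>) / r) / pi"
    unfolding y_def by (simp add: exp_diff exp_minus field_simps mult.commute mult.left_commute)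
  from S show ?thesis unfolding eq eq2 sums_def .
qed

lemma tm_alt:
  assumes r: "r > 0"
  shows "tm \<nu> x n r = (-(x * r powr \<nu>))^n * sin (real n * (pi*\<nu>)) / fact n * (1 / (pi * r * exp r))"
proof -
  have "r powr (\<nu>*n - 1) = (r powr \<nu>)^n / r"
    using r by (simp add: powr_diff powr_powr[symmetric] powr_realpow)
  moreover have "(- (x * r powr \<nu>)) ^ n = (- x) ^ n * (r powr \<nu>) ^ n"
    by (metis minus_mult_left power_mult_distrib)
  ultimately show ?thesis unfolding tm_def
    by (simp add: field_simps mult.commute mult.left_commute)
qed

lemma exp_sin_sum_bound:
  fixes y c :: real
  assumes "0 \<le> y"
  shows "(\<Sum>n<N. y^n * \<bar>sin (real n * c)\<bar> / fact n) \<le> exp y - 1"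
proof (cases N)
  case 0
  then show ?thesis using assms by simp
next
  case (Suc M)
  have "(\<Sum>n<N. y^n * \<bar>sin (real n * c)\<bar> / fact n) = (\<Sum>n<M. y^Suc n * \<bar>sin (real (Suc n) * c)\<bar> / fact (Suc n))"
    unfolding Suc sum.lessThan_Suc_shift by simp
  also have "\<dots> \<le> (\<Sum>n<M. y^Suc n / fact (Suc n))"
  proof (rule sum_mono)
    fix n assume "n \<in> {..<M}"
    have "y^Suc n * \<bar>sin (real (Suc n) * c)\<bar> \<le> y^Suc n * 1"
      using assms by (intro mult_left_mono) auto
    then show "y^Suc n * \<bar>sin (real (Suc n) * c)\<bar> / fact (Suc n) \<le> y^Suc n / fact (Suc n)"
      by (simp add: divide_right_mono)
  qed
  also have "\<dots> \<le> exp y - 1"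
  proof -
    have "(\<lambda>n. y^n /\<^sub>R fact n) sums exp y" by (rule exp_converges)
    then have "(\<lambda>n. y^n / fact n) sums exp y" by (simp add: divide_inverse mult.commute)
    then have S: "(\<lambda>n. y^Suc n / fact (Suc n)) sums (exp y - 1)"
      using sums_Suc_iff[of "\<lambda>n. y^n / fact n" "exp y - 1"] by simp
    show ?thesis
      using sum_le_suminf[OF sums_summable[OF S], of "{..<M}"] sums_unique[OF S] assms by auto
  qed
  finally show ?thesis .
qed

lemma exp_minus_one_le: "0 \<le> (y::real) \<Longrightarrow> exp y - 1 \<le> y * exp y"
proof -
  have "1 + (-y) \<le> exp (-y)" by (rule exp_ge_add_one_self)
  then have "(1 - y) * exp y \<le> exp (-y) * exp y" by (intro mult_right_mono) auto
  then show ?thesis by (simp add: exp_minus field_simps)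
qed

definition Fb :: "real \<Rightarrow> real \<Rightarrow> real" where
  "Fb \<nu> r = (if r \<in> {0..1} then r powr (\<nu> - 1) else exp (-r/2))"

definition KK :: "real \<Rightarrow> real" where
  "KK x = (x + 1) * exp (x + x^2/2) / pi"

lemma tm_bound:
  assumes nu: "0 < \<nu>" "\<nu> \<le> 1/2" and x: "0 < x" and r: "0 \<le> r"
  shows "norm (\<Sum>n<N. tm \<nu> x n r) \<le> KK x * Fb \<nu> r"
proof (cases "r = 0")
  case True
  then show ?thesis by (simp add: tm_def Fb_def KK_def)
next
  case False
  with r have r: "r > 0" by simp
  define y where "y = x * r powr \<nu>"
  have y0: "0 < y" using x r by (simp add: y_def)
  have "norm (\<Sum>n<N. tm \<nu> x n r) \<le> (\<Sum>n<N. \<bar>tm \<nu> x n r\<bar>)"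
    by (metis real_norm_def sum_abs)
  also have "\<dots> = (\<Sum>n<N. y^n * \<bar>sin (real n * (pi*\<nu>))\<bar> / fact n) * (1 / (pi * r * exp r))"
    unfolding sum_distrib_right
    by (intro sum.cong refl) (use x r in \<open>simp add: tm_alt[OF r] y_def abs_mult power_abs abs_divide\<close>)
  also have "\<dots> \<le> (exp y - 1) * (1 / (pi * r * exp r))"
    using r by (intro mult_right_mono exp_sin_sum_bound) (auto simp: y_def x less_imp_le)
  also have "\<dots> \<le> KK x * Fb \<nu> r"
  proof (cases "r \<le> 1")
    case True
    have rp: "r powr \<nu> \<le> 1" using True r nu powr_mono2[of \<nu> r 1] by simp
    have "(exp y - 1) * (1 / (pi * r * exp r)) \<le> y * exp y * (1 / (pi * r))"
    proof -
      have "(exp y - 1) * (1 / (pi * r * exp r)) \<le> (exp y - 1) * (1 / (pi * r))"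
        using r y0 by (intro mult_left_mono) (auto simp: field_simps)
      also have "\<dots> \<le> y * exp y * (1 / (pi * r))"
        using r by (intro mult_right_mono exp_minus_one_le) (auto simp: y0 less_imp_le)
      finally show ?thesis .
    qed
    also have "\<dots> \<le> x * exp x * (r powr (\<nu> - 1)) / pi"
    proof -
      have "y \<le> x" using rp x by (simp add: y_def mult_left_le)
      then have "exp y \<le> exp x" by simp
      have "y * exp y * (1 / (pi * r)) = x * exp y * (r powr (\<nu> - 1)) / pi"
        using r by (simp add: y_def powr_diff field_simps)
      also have "\<dots> \<le> x * exp x * (r powr (\<nu> - 1)) / pi"
        using \<open>exp y \<le> exp x\<close> x by (intro divide_right_mono mult_right_mono mult_left_mono) auto
      finally show ?thesis .
    qed
    also have "\<dots> \<le> KK x * Fb \<nu> r"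
    proof -
      have "x * exp x \<le> (x + 1) * exp (x + x^2/2)"
        using x by (intro mult_mono) auto
      then have "x * exp x * (r powr (\<nu> - 1)) / pi \<le> (x + 1) * exp (x + x^2/2) * (r powr (\<nu> - 1)) / pi"
        by (intro divide_right_mono mult_right_mono) auto
      moreover have "Fb \<nu> r = r powr (\<nu> - 1)" using True r by (simp add: Fb_def)
      ultimately show ?thesis unfolding KK_def by simp
    qed
    finally show ?thesis .
  next
    case False
    have rp: "r powr \<nu> \<le> sqrt r" using False nu powr_mono[of \<nu> "1/2" r] powr_half_sqrt[of r] by simp
    have "y \<le> x * sqrt r" using rp x by (simp add: y_def)
    also have "\<dots> \<le> x^2/2 + r/2"
    proof -
      have "0 \<le> (x - sqrt r)^2" by simp
      then show ?thesis using r by (simp add: power2_eq_square algebra_simps)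
    qed
    finally have yb: "y \<le> x^2/2 + r/2" .
    have "(exp y - 1) * (1 / (pi * r * exp r)) \<le> exp y * (1 / (pi * exp r))"
    proof -
      have "(exp y - 1) * (1 / (pi * r * exp r)) \<le> exp y * (1 / (pi * r * exp r))"
        using r by (intro mult_right_mono) auto
      also have "\<dots> \<le> exp y * (1 / (pi * exp r))"
        using False by (intro mult_left_mono) (auto simp: field_simps)
      finally show ?thesis .
    qed
    also have "\<dots> \<le> exp (x^2/2 + r/2) * (1 / (pi * exp r))"
      using yb by (intro mult_right_mono) auto
    also have "\<dots> = exp (x^2/2) * exp (-r/2) / pi"
      by (simp add: exp_add exp_minus field_simps flip: exp_add)
    also have "\<dots> \<le> KK x * Fb \<nu> r"
    proof -
      have "exp (x^2/2) \<le> (x + 1) * exp (x + x^2/2)"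
      proof -
        have "exp (x^2/2) \<le> exp (x + x^2/2)" using x by simp
        also have "\<dots> \<le> (x + 1) * exp (x + x^2/2)" using x by simp
        finally show ?thesis .
      qed
      then show ?thesis using False unfolding KK_def Fb_def
        by (auto intro!: divide_right_mono mult_right_mono)
    qed
    finally show ?thesis .
  qed
  finally show ?thesis .
qed

lemma wright_series:
  assumes nu: "0 < \<nu>" "\<nu> \<le> 1/2" and x: "0 < x"
  defines "G \<equiv> (\<lambda>r. - (exp (- r - x * cos (pi*\<nu>) * r powr \<nu>) * sin (x * sin (pi*\<nu>) * r powr \<nu>) / r) / pi)"
  shows "G integrable_on {0..}"
    and "(\<lambda>n. (-x)^n / fact n * (sin (pi*\<nu>*n) / pi) * Gamma (\<nu>*n)) sums integral {0..} G"
proof -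
  define c where "c = (\<lambda>n. (-x)^n / fact n * (sin (pi*\<nu>*n) / pi) * Gamma (\<nu>*n))"
  have fk: "((\<lambda>r. \<Sum>n<k. tm \<nu> x n r) has_integral (\<Sum>n<k. c n)) {0..}" for k
    unfolding c_def by (intro has_integral_sum tm_integral nu) auto
  have hI: "(\<lambda>r. KK x * Fb \<nu> r) integrable_on {0..}"
  proof -
    have "(\<lambda>r. if r \<in> {0..1} then r powr (\<nu> - 1) else exp (-r/2)) integrable_on {0..}"
      using integrable_Gamma_integral_bound[of "\<nu> - 1" 1] nu by simp
    then have "Fb \<nu> integrable_on {0..}" unfolding Fb_def[abs_def] by simp
    then show ?thesis using integrable_on_cmult_left[of "Fb \<nu>" "{0..}" "KK x"] by simp
  qed
  have DC: "G integrable_on {0..}" "(\<lambda>k. integral {0..} (\<lambda>r. \<Sum>n<k. tm \<nu> x n r)) \<longlonglongrightarrow> integral {0..} G"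
  proof -
    have fI: "(\<lambda>r. \<Sum>n<k. tm \<nu> x n r) integrable_on {0..}" for k using fk[of k] by blast
    have bnd: "norm (\<Sum>n<k. tm \<nu> x n r) \<le> KK x * Fb \<nu> r" if "r \<in> {0..}" for k r
      using tm_bound[OF nu x, of r k] that by simp
    have conv: "(\<lambda>k. \<Sum>n<k. tm \<nu> x n r) \<longlonglongrightarrow> G r" if "r \<in> {0..}" for r
      using tm_pointwise[of r \<nu> x] that unfolding G_def by simp
    show "G integrable_on {0..}" "(\<lambda>k. integral {0..} (\<lambda>r. \<Sum>n<k. tm \<nu> x n r)) \<longlonglongrightarrow> integral {0..} G"
      using dominated_convergence[OF fI hI bnd conv] by auto
  qed
  show "G integrable_on {0..}" by (rule DC(1))
  have "(\<lambda>k. \<Sum>n<k. c n) \<longlonglongrightarrow> integral {0..} G"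
  proof -
    have "integral {0..} (\<lambda>r. \<Sum>n<k. tm \<nu> x n r) = (\<Sum>n<k. c n)" for k
      using fk[of k] by (rule integral_unique)
    then show ?thesis using DC(2) by simp
  qed
  then show "(\<lambda>n. (-x)^n / fact n * (sin (pi*\<nu>*n) / pi) * Gamma (\<nu>*n)) sums integral {0..} G"
    unfolding sums_def c_def .
qed


lemma uv_deriv:
  fixes a b \<nu> r :: real
  assumes r: "0 < r" and b: "0 < b" and nu: "0 < \<nu>"
  shows "((\<lambda>r. exp (-r - a * r powr \<nu>) * r powr (-\<nu>) / (b*\<nu>) * (1 - cos (b * r powr \<nu>)))
     has_real_derivative
     (exp (-r - a * r powr \<nu>) * sin (b * r powr \<nu>) / r
      - exp (-r - a * r powr \<nu>) / (b*\<nu>) * (r powr (-\<nu>) * (1 + a * \<nu> * r powr (\<nu> - 1)) + \<nu> * r powr (-\<nu> - 1))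
        * (1 - cos (b * r powr \<nu>)))) (at r)"
proof -
  have p1: "((\<lambda>r. r powr \<nu>) has_real_derivative \<nu> * r powr (\<nu> - 1)) (at r)"
    by (rule has_real_derivative_powr[OF r])
  have p2: "((\<lambda>r. r powr (-\<nu>)) has_real_derivative (-\<nu>) * r powr (-\<nu> - 1)) (at r)"
    by (rule has_real_derivative_powr[OF r])
  have dE: "((\<lambda>r. exp (-r - a * r powr \<nu>)) has_real_derivative exp (-r - a * r powr \<nu>) * (-1 - a * (\<nu> * r powr (\<nu> - 1)))) (at r)"
    by (intro DERIV_fun_exp DERIV_diff DERIV_cmult p1 DERIV_minus DERIV_ident[THEN DERIV_cong]) auto
  have dV: "((\<lambda>r. 1 - cos (b * r powr \<nu>)) has_real_derivative sin (b * r powr \<nu>) * (b * (\<nu> * r powr (\<nu> - 1)))) (at r)"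
    using DERIV_diff[OF DERIV_const DERIV_fun_cos[OF DERIV_cmult[OF p1, of b]]] by simp
  have dU: "((\<lambda>r. exp (-r - a * r powr \<nu>) * r powr (-\<nu>) / (b*\<nu>)) has_real_derivative
      (exp (-r - a * r powr \<nu>) * (-1 - a * (\<nu> * r powr (\<nu> - 1))) * r powr (-\<nu>) + exp (-r - a * r powr \<nu>) * ((-\<nu>) * r powr (-\<nu> - 1))) / (b*\<nu>)) (at r)"
    using DERIV_cdivide[OF DERIV_mult[OF dE p2], of "b*\<nu>"] by (rule DERIV_cong) (simp add: algebra_simps)
  from DERIV_mult[OF dU dV] show ?thesis
  proof (rule DERIV_cong)
    have e1: "r powr (-\<nu>) * r powr (\<nu> - 1) = 1 / r" using r by (simp add: powr_add[symmetric])
    show "(exp (-r - a * r powr \<nu>) * (-1 - a * (\<nu> * r powr (\<nu> - 1))) * r powr (-\<nu>) + exp (-r - a * r powr \<nu>) * ((-\<nu>) * r powr (-\<nu> - 1))) / (b*\<nu>) * (1 - cos (b * r powr \<nu>)) +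
      (sin (b * r powr \<nu>) * (b * (\<nu> * r powr (\<nu> - 1)))) * (exp (-r - a * r powr \<nu>) * r powr (-\<nu>) / (b*\<nu>)) = 
     exp (-r - a * r powr \<nu>) * sin (b * r powr \<nu>) / r
      - exp (-r - a * r powr \<nu>) / (b*\<nu>) * (r powr (-\<nu>) * (1 + a * \<nu> * r powr (\<nu> - 1)) + \<nu> * r powr (-\<nu> - 1))
        * (1 - cos (b * r powr \<nu>))"
    proof -
      have "exp (-r - a * r powr \<nu>) * r powr (-\<nu>) / (b*\<nu>) * (sin (b * r powr \<nu>) * (b * (\<nu> * r powr (\<nu> - 1))))
         = exp (-r - a * r powr \<nu>) * sin (b * r powr \<nu>) * (r powr (-\<nu>) * r powr (\<nu> - 1))"
        using b nu by (simp add: field_simps)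
      also have "\<dots> = exp (-r - a * r powr \<nu>) * sin (b * r powr \<nu>) / r" by (simp add: e1)
      finally have A: "exp (-r - a * r powr \<nu>) * r powr (-\<nu>) / (b*\<nu>) * (sin (b * r powr \<nu>) * (b * (\<nu> * r powr (\<nu> - 1))))
         = exp (-r - a * r powr \<nu>) * sin (b * r powr \<nu>) / r" .
      have B: "(exp (-r - a * r powr \<nu>) * (-1 - a * (\<nu> * r powr (\<nu> - 1))) * r powr (-\<nu>) + exp (-r - a * r powr \<nu>) * ((-\<nu>) * r powr (-\<nu> - 1))) / (b*\<nu>) * (1 - cos (b * r powr \<nu>))
        = - (exp (-r - a * r powr \<nu>) / (b*\<nu>) * (r powr (-\<nu>) * (1 + a * \<nu> * r powr (\<nu> - 1)) + \<nu> * r powr (-\<nu> - 1))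
        * (1 - cos (b * r powr \<nu>)))"
        by (simp add: divide_simps algebra_simps)
      show ?thesis using A B by (simp add: mult.commute)
    qed
  qed
qed

lemma Fb_int: "0 < \<nu> \<Longrightarrow> Fb \<nu> integrable_on {0..}"
proof -
  assume nu: "0 < \<nu>"
  have "(\<lambda>r. if r \<in> {0..1} then r powr (\<nu> - 1) else exp (-r/2)) integrable_on {0..}"
    using integrable_Gamma_integral_bound[of "\<nu> - 1" 1] nu by simp
  then show "Fb \<nu> integrable_on {0..}" unfolding Fb_def[abs_def] by simp
qed

lemma one_minus_cos_le: "1 - cos (t::real) \<le> t^2 / 2"
proof -
  have "cos t = 1 - 2 * (sin (t/2))^2" using cos_double_sin[of "t/2"] by simp
  moreover have "(sin (t/2))^2 \<le> (t/2)^2"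
    using abs_sin_x_le_abs_x[of "t/2"] by (metis abs_ge_zero power2_abs power_mono)
  ultimately show ?thesis by (simp add: power2_eq_square)
qed

lemma pos_integral:
  fixes a b \<nu> :: real
  assumes nu: "0 < \<nu>" "\<nu> < 1" and a: "0 \<le> a" and b: "0 < b"
  assumes fi: "(\<lambda>r. exp (-r - a * r powr \<nu>) * sin (b * r powr \<nu>) / r) integrable_on {0..}"
  shows "integral {0..} (\<lambda>r. exp (-r - a * r powr \<nu>) * sin (b * r powr \<nu>) / r) > 0"
proof -
  define f where "f = (\<lambda>r. exp (-r - a * r powr \<nu>) * sin (b * r powr \<nu>) / r)"
  define u where "u = (\<lambda>r. exp (-r - a * r powr \<nu>) * r powr (-\<nu>) / (b*\<nu>) * (1 - cos (b * r powr \<nu>)))"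
  define p where "p = (\<lambda>r. exp (-r - a * r powr \<nu>) / (b*\<nu>) * (r powr (-\<nu>) * (1 + a * \<nu> * r powr (\<nu> - 1)) + \<nu> * r powr (-\<nu> - 1)) * (1 - cos (b * r powr \<nu>)))"
  have fi': "f integrable_on {0..}" using fi unfolding f_def .
  have u_nonneg: "u r \<ge> 0" if "r > 0" for r
    unfolding u_def using that b nu a by (intro mult_nonneg_nonneg divide_nonneg_nonneg) auto
  have ftc: "((\<lambda>r. f r - p r) has_integral (u R - u e)) {e..R}" if e: "0 < e" "e \<le> R" for e R
  proof (rule fundamental_theorem_of_calculus[OF e(2)])
    fix x assume "x \<in> {e..R}"
    then have "x > 0" using e by auto
    from uv_deriv[OF this b nu(1), of a] show "(u has_vector_derivative f x - p x) (at x within {e..R})"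
      unfolding u_def f_def p_def has_real_derivative_iff_has_vector_derivative[symmetric]
      by (rule has_field_derivative_at_within)
  qed
  have fI: "f integrable_on {e..R}" if "0 < e" for e R
    by (rule integrable_on_subinterval[OF fi']) (use that in auto)
  have key: "integral {e..R} f = u R - u e + integral {e..R} p" if e: "0 < e" "e \<le> R" for e R
  proof -
    have pI: "p integrable_on {e..R}"
    proof -
      have "(\<lambda>r. f r - (f r - p r)) integrable_on {e..R}"
        by (rule integrable_diff[OF fI[OF e(1)] has_integral_integrable[OF ftc[OF e]]])
      then show ?thesis by simp
    qed
    have "integral {e..R} (\<lambda>r. f r - p r) = u R - u e" using ftc[OF e] by (rule integral_unique)
    moreover have "integral {e..R} (\<lambda>r. f r - p r) = integral {e..R} f - integral {e..R} p"
      using fI[OF e(1)] pI by (rule integral_diff)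
    ultimately show ?thesis by simp
  qed
  define r0 where "r0 = (pi/(2*b)) powr (1/\<nu>)"
  define r1 where "r1 = (pi/b) powr (1/\<nu>)"
  have r0p: "0 < r0" using b by (simp add: r0_def)
  have r01: "r0 < r1" unfolding r0_def r1_def using b nu
    by (intro powr_less_mono2) (auto simp: field_simps)
  have br0: "b * r0 powr \<nu> = pi/2" using b nu by (simp add: r0_def powr_powr)
  have br1: "b * r1 powr \<nu> = pi" using b nu by (simp add: r1_def powr_powr)
  define c0 where "c0 = exp (-r1 - a * r1 powr \<nu>) / (b*\<nu>) * (\<nu> * r1 powr (-\<nu> - 1))"
  have c0p: "0 < c0" unfolding c0_def using b nu r0p r01 by auto
  have p_nonneg: "p r \<ge> 0" if "r > 0" for r
    unfolding p_def using that b nu a by (intro mult_nonneg_nonneg divide_nonneg_nonneg add_nonneg_nonneg) auto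
  have p_low: "p r \<ge> c0" if r: "r \<in> {r0..r1}" for r
  proof -
    have rp: "r > 0" using r r0p by auto
    have "b * r0 powr \<nu> \<le> b * r powr \<nu>" using r r0p b nu by (intro mult_left_mono powr_mono2) auto
    moreover have "b * r powr \<nu> \<le> b * r1 powr \<nu>" using r r0p b nu by (intro mult_left_mono powr_mono2) auto
    ultimately have t: "pi/2 \<le> b * r powr \<nu>" "b * r powr \<nu> \<le> pi" using br0 br1 by auto
    have "cos (pi - b * r powr \<nu>) \<ge> 0" using t by (intro cos_ge_zero) auto
    then have cosle: "1 \<le> 1 - cos (b * r powr \<nu>)" by (simp add: cos_diff)
    have e1: "exp (-r1 - a * r1 powr \<nu>) \<le> exp (-r - a * r powr \<nu>)"
    proof -
      have "a * r powr \<nu> \<le> a * r1 powr \<nu>" using r rp a nu by (intro mult_left_mono powr_mono2) auto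
      then show ?thesis using r by simp
    qed
    have e2: "\<nu> * r1 powr (-\<nu> - 1) \<le> r powr (-\<nu>) * (1 + a * \<nu> * r powr (\<nu> - 1)) + \<nu> * r powr (-\<nu> - 1)"
    proof -
      have "\<nu> * r1 powr (-\<nu> - 1) \<le> \<nu> * r powr (-\<nu> - 1)"
        using r rp nu by (intro mult_left_mono powr_mono2') auto
      moreover have "0 \<le> r powr (-\<nu>) * (1 + a * \<nu> * r powr (\<nu> - 1))" using a nu by auto
      ultimately show ?thesis by linarith
    qed
    have "c0 \<le> exp (-r - a * r powr \<nu>) / (b*\<nu>) * (r powr (-\<nu>) * (1 + a * \<nu> * r powr (\<nu> - 1)) + \<nu> * r powr (-\<nu> - 1))"
      unfolding c0_def using b nu e1 e2
      by (intro mult_mono divide_right_mono) auto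
    also have "\<dots> \<le> p r"
    proof -
      have X0: "0 \<le> exp (-r - a * r powr \<nu>) / (b*\<nu>) * (r powr (-\<nu>) * (1 + a * \<nu> * r powr (\<nu> - 1)) + \<nu> * r powr (-\<nu> - 1))"
        using a b nu by (auto intro!: mult_nonneg_nonneg add_nonneg_nonneg divide_nonneg_nonneg)
      from mult_left_mono[OF cosle X0] show ?thesis unfolding p_def by simp
    qed
    finally show ?thesis .
  qed
  have lowb: "integral {e..R} f \<ge> - u e + c0 * (r1 - r0)" if e: "0 < e" "e \<le> r0" "r1 \<le> R" for e R
  proof -
    have eR: "e \<le> R" using e r01 by auto
    have pI: "p integrable_on {e..R}"
    proof -
      have "(\<lambda>r. f r - (f r - p r)) integrable_on {e..R}"
        by (rule integrable_diff[OF fI[OF e(1)] has_integral_integrable[OF ftc[OF e(1) eR]]])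
      then show ?thesis by simp
    qed
    define q where "q = (\<lambda>r. if r \<in> {r0..r1} then c0 else 0)"
    have sub: "{r0..r1} \<inter> {e..R} = {r0..r1}" using e by auto
    have qI: "q integrable_on {e..R}" unfolding q_def integrable_restrict_Int sub by (intro integrable_continuous_interval continuous_on_const)
    have qint: "integral {e..R} q = c0 * (r1 - r0)" unfolding q_def integral_restrict_Int sub
      using r01 by simp
    have "integral {e..R} q \<le> integral {e..R} p"
      using qI pI proof (rule integral_le)
      fix r assume "r \<in> {e..R}"
      then show "q r \<le> p r" using p_low p_nonneg e by (auto simp: q_def)
    qed
    then have "c0 * (r1 - r0) \<le> integral {e..R} p" using qint by simp
    moreover have "u R \<ge> 0" using u_nonneg e r0p r01 by auto
    ultimately show ?thesis using key[OF e(1) eR] by linarith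
  qed
  define ee where "ee = (\<lambda>k::nat. r0 / real (Suc k))"
  define RR where "RR = (\<lambda>k::nat. r1 + real k)"
  have ee_pos: "0 < ee k" for k using r0p by (simp add: ee_def)
  have ee_le: "ee k \<le> r0" for k using r0p by (simp add: ee_def field_simps)
  have RR_ge: "r1 \<le> RR k" for k by (simp add: RR_def)
  have ee0: "ee \<longlonglongrightarrow> 0"
    unfolding ee_def using LIMSEQ_Suc[OF lim_const_over_n[of r0]] by simp
  have lim1: "(\<lambda>k. integral {ee k..RR k} f) \<longlonglongrightarrow> integral {0..} f"
  proof -
    define fk where "fk = (\<lambda>k r. if r \<in> {ee k..RR k} then f r else 0)"
    have sub: "{ee k..RR k} \<inter> {0..} = {ee k..RR k}" for k using ee_pos[of k] by auto
    have fkI: "fk k integrable_on {0..}" for k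
      unfolding fk_def integrable_restrict_Int sub by (rule fI[OF ee_pos])
    have fkint: "integral {0..} (fk k) = integral {ee k..RR k} f" for k
      unfolding fk_def integral_restrict_Int sub ..
    have hI: "(\<lambda>r. (b+1) * Fb \<nu> r) integrable_on {0..}"
      using integrable_on_cmult_left[OF Fb_int[OF nu(1)], of "b+1"] by simp
    have f0: "f 0 = 0" by (simp add: f_def)
    have fbound: "norm (f r) \<le> (b+1) * Fb \<nu> r" if "r \<in> {0..}" for r
    proof (cases "r = 0")
      case True
      then show ?thesis using f0 b by (simp add: Fb_def)
    next
      case False
      then have rp: "r > 0" using that by simp
      have nf: "norm (f r) = exp (-r - a * r powr \<nu>) * \<bar>sin (b * r powr \<nu>)\<bar> / r"
        using rp by (simp add: f_def abs_mult)
      have arp: "0 \<le> a * r powr \<nu>" using a by simp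
      have E1: "exp (-r - a * r powr \<nu>) \<le> 1" using arp rp by simp
      have E2: "exp (-r - a * r powr \<nu>) \<le> exp (-r)" using arp by simp
      show ?thesis
      proof (cases "r \<le> 1")
        case True
        have "norm (f r) \<le> 1 * (b * r powr \<nu>) / r" unfolding nf
          using rp a b abs_sin_x_le_abs_x[of "b * r powr \<nu>"] E1
          by (intro divide_right_mono mult_mono) auto
        also have "\<dots> = b * r powr (\<nu> - 1)" using rp by (simp add: powr_diff)
        also have "\<dots> \<le> (b+1) * r powr (\<nu> - 1)" by (intro mult_right_mono) auto
        finally show ?thesis using True rp by (simp add: Fb_def)
      next
        case False
        have "norm (f r) \<le> exp (-r) * 1 / 1" unfolding nf
          using False a E2
          by (intro frac_le mult_mono) auto
        also have "\<dots> \<le> exp (-r/2)" using False by simp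
        also have "\<dots> \<le> (b+1) * exp (-r/2)" using b by simp
        finally show ?thesis using False by (simp add: Fb_def)
      qed
    qed
    have bnd: "norm (fk k r) \<le> (b+1) * Fb \<nu> r" if "r \<in> {0..}" for k r
      using fbound[OF that] b that by (auto simp: fk_def Fb_def)
    have conv: "(\<lambda>k. fk k r) \<longlonglongrightarrow> f r" if "r \<in> {0..}" for r
    proof (cases "r = 0")
      case True
      have "fk k r = f r" for k using True f0 by (simp add: fk_def)
      then show ?thesis by simp
    next
      case False
      then have rp: "r > 0" using that by simp
      have ev1: "eventually (\<lambda>k. ee k < r) sequentially" using order_tendstoD(2)[OF ee0 rp] .
      obtain N where N: "r \<le> real N" using real_arch_simple by blast
      have ev2: "eventually (\<lambda>k. r \<le> RR k) sequentially"
        by (rule eventually_sequentiallyI[of N]) (use N r01 r0p in \<open>auto simp: RR_def\<close>)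
      have "eventually (\<lambda>k. fk k r = f r) sequentially"
        using ev1 ev2 by eventually_elim (auto simp: fk_def)
      then show ?thesis by (rule tendsto_eventually)
    qed
    from dominated_convergence(2)[OF fkI hI bnd conv]
    show ?thesis unfolding fkint .
  qed
  have lim2: "(\<lambda>k. u (ee k)) \<longlonglongrightarrow> 0"
  proof -
    have ub: "u r \<le> b/(2*\<nu>) * r powr \<nu>" if rp: "r > 0" for r
    proof -
      have arp: "0 \<le> a * r powr \<nu>" using a by simp
      have E: "exp (-r - a * r powr \<nu>) \<le> 1" using rp arp by simp
      have C: "1 - cos (b * r powr \<nu>) \<le> (b * r powr \<nu>)^2/2" by (rule one_minus_cos_le)
      have "u r \<le> 1 * (r powr (-\<nu>) / (b*\<nu>)) * ((b * r powr \<nu>)^2/2)"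
        unfolding u_def using E C b nu
        by (simp only: mult.assoc times_divide_eq_right[symmetric])
           (intro mult_mono mult_nonneg_nonneg divide_nonneg_nonneg; auto)
      also have "\<dots> = b/(2*\<nu>) * (r powr (-\<nu>) * r powr \<nu>) * r powr \<nu>"
        using b nu by (simp add: power2_eq_square field_simps)
      also have "r powr (-\<nu>) * r powr \<nu> = 1" using rp by (simp add: powr_add[symmetric])
      finally show ?thesis by simp
    qed
    have h0: "(\<lambda>k. b/(2*\<nu>) * ee k powr \<nu>) \<longlonglongrightarrow> 0"
      using tendsto_mult_right_zero[OF tendsto_zero_powrI[OF ee0 tendsto_const[of \<nu>]], of "b/(2*\<nu>)"] ee_pos nu
      by (simp add: less_imp_le)
    show ?thesis
      by (rule real_tendsto_sandwich[OF _ _ tendsto_const h0])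
         (use u_nonneg ub ee_pos in auto)
  qed
  have "c0 * (r1 - r0) \<le> integral {0..} f"
  proof (rule LIMSEQ_le[OF _ lim1])
    show "(\<lambda>k. - u (ee k) + c0 * (r1 - r0)) \<longlonglongrightarrow> c0 * (r1 - r0)"
      using tendsto_add[OF tendsto_minus[OF lim2] tendsto_const[of "c0 * (r1 - r0)"]] by simp
    show "\<exists>N. \<forall>n\<ge>N. - u (ee n) + c0 * (r1 - r0) \<le> integral {ee n..RR n} f"
      using lowb[OF ee_pos ee_le RR_ge] by blast
  qed
  moreover have "0 < c0 * (r1 - r0)" using c0p r01 by simp
  ultimately show ?thesis unfolding f_def by linarith
qed

lemma rGamma_one_minus:
  assumes "0 < z"
  shows "rGamma (1 - z) = sin (pi * z) / pi * Gamma z"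
proof -
  have "rGamma (complex_of_real z) * rGamma (1 - complex_of_real z) = sin (complex_of_real pi * complex_of_real z) / complex_of_real pi"
    by (rule rGamma_reflection_complex)
  then have "complex_of_real (rGamma z * rGamma (1 - z)) = complex_of_real (sin (pi * z) / pi)"
    by (simp add: rGamma_complex_of_real[symmetric] sin_of_real[symmetric])
  then have R: "rGamma z * rGamma (1 - z) = sin (pi * z) / pi" using of_real_eq_iff by blast
  have G: "Gamma z * rGamma z = 1" using Gamma_real_pos[OF assms] by (simp add: Gamma_def)
  have "rGamma (1 - z) = (Gamma z * rGamma z) * rGamma (1 - z)" using G by simp
  also have "\<dots> = Gamma z * (rGamma z * rGamma (1 - z))" by (simp add: mult.assoc)
  also have "\<dots> = sin (pi * z) / pi * Gamma z" using R by simp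
  finally show ?thesis .
qed

lemma wright_lt_one:
  fixes \<nu> x :: real
  assumes nu: "0 < \<nu>" "\<nu> \<le> 1/2" and x: "0 < x"
  shows "Wright (- x) (- \<nu>) 1 < 1"
proof -
  define G where "G = (\<lambda>r. - (exp (- r - x * cos (pi*\<nu>) * r powr \<nu>) * sin (x * sin (pi*\<nu>) * r powr \<nu>) / r) / pi)"
  define f where "f = (\<lambda>r. exp (- r - (x * cos (pi*\<nu>)) * r powr \<nu>) * sin ((x * sin (pi*\<nu>)) * r powr \<nu>) / r)"
  have GI: "G integrable_on {0..}" and S: "(\<lambda>n. (-x)^n / fact n * (sin (pi*\<nu>*n) / pi) * Gamma (\<nu>*n)) sums integral {0..} G"
    using wright_series[OF nu x] unfolding G_def by auto
  have fG: "f = (\<lambda>r. (-pi) * G r)" by (simp add: f_def G_def fun_eq_iff)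
  have fI: "f integrable_on {0..}" unfolding fG using integrable_on_cmult_left[OF GI, of "-pi"] by simp
  have "integral {0..} f = (-pi) * integral {0..} G" unfolding fG by simp
  moreover have "integral {0..} f > 0"
    unfolding f_def
  proof (rule pos_integral)
    show "0 < \<nu>" "\<nu> < 1" using nu by auto
    have pn0: "0 < pi*\<nu>" using nu by simp
    have pn1: "pi*\<nu> \<le> pi/2" using nu mult_left_mono[of \<nu> "1/2" pi] by simp
    have "0 \<le> cos (pi*\<nu>)" using pn0 pn1 pi_gt_zero by (intro cos_ge_zero) linarith+
    then show "0 \<le> x * cos (pi*\<nu>)" using x by simp
    have "0 < sin (pi*\<nu>)" using pn0 pn1 pi_gt_zero by (intro sin_gt_zero) linarith+
    then show "0 < x * sin (pi*\<nu>)" using x by simp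
    show "(\<lambda>r. exp (- r - (x * cos (pi*\<nu>)) * r powr \<nu>) * sin ((x * sin (pi*\<nu>)) * r powr \<nu>) / r) integrable_on {0..}"
      using fI unfolding f_def .
  qed
  ultimately have Gneg: "integral {0..} G < 0" by (simp add: mult_less_0_iff)
  have tmeq: "(-x)^n / fact n * rGamma (- \<nu> * real n + 1) =
      (-x)^n / fact n * (sin (pi*\<nu>*n) / pi) * Gamma (\<nu>*n) + (if n = 0 then 1 else 0)" for n
  proof (cases "n = 0")
    case True then show ?thesis by simp
  next
    case False
    then have "0 < \<nu> * n" using nu by simp
    from rGamma_one_minus[OF this] have "rGamma (- \<nu> * real n + 1) = sin (pi*\<nu>*n) / pi * Gamma (\<nu>*n)"
      by (simp add: mult.assoc)
    then show ?thesis using False by simp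
  qed
  have S2: "(\<lambda>n. (-x)^n / fact n * rGamma (- \<nu> * real n + 1)) sums (integral {0..} G + 1)"
    unfolding tmeq by (intro sums_add S) (rule sums_single[of 0 "\<lambda>_. 1::real", simplified])
  have "Wright (- x) (- \<nu>) 1 = integral {0..} G + 1"
    unfolding Wright_def using sums_unique[OF S2] by simp
  with Gneg show ?thesis by simp
qed


lemma aux_alg: "(S::real) \<noteq> 0 \<Longrightarrow> D - X * P / S + (- X / S) * Y = D - X * (Y + P) / S"
  by (simp add: field_simps)

theorem mainTheorem2:
  fixes \<alpha> lam k m h C D B \<eta>t \<xi>t :: real
    and K H :: "real \<Rightarrow> real"
    and u1 u3 :: "real \<Rightarrow> real \<Rightarrow> real" and s1 s3 :: "real \<Rightarrow> real"
  assumes "0 < \<alpha>" "\<alpha> < 1"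
    and "0 < lam" "0 < k" "0 < m" "0 < h" "C < D" "0 < D"
    and K_def: "\<And>\<eta>. K \<eta> = \<eta> * (1 - Wright (- \<eta>) (- \<alpha> / 2) 1
                    + m / (h * lam * Gamma (1 - \<alpha> / 2))) * (1 / Mainardi (\<alpha> / 2) \<eta>)"
    and \<eta>t_pos: "0 < \<eta>t"
    and \<eta>t_sol: "K \<eta>t = k / lam\<^sup>2 * (Gamma (1 - \<alpha> / 2) / Gamma (1 + \<alpha> / 2)) * (D - C)"
    and \<eta>t_uniq: "\<And>\<eta>. 0 < \<eta> \<Longrightarrow>
          K \<eta> = k / lam\<^sup>2 * (Gamma (1 - \<alpha> / 2) / Gamma (1 + \<alpha> / 2)) * (D - C) \<Longrightarrow> \<eta> = \<eta>t"
    and B_def: "B = D - (D - C) * (m / (h * lam * Gamma (1 - \<alpha> / 2))) *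
          (1 / (1 - Wright (- \<eta>t) (- \<alpha> / 2) 1 + m / (h * lam * Gamma (1 - \<alpha> / 2))))"
    and H_def: "\<And>\<xi>. H \<xi> = \<xi> * (1 - Wright (- \<xi>) (- \<alpha> / 2) 1) * (1 / Mainardi (\<alpha> / 2) \<xi>)"
    and \<xi>t_pos: "0 < \<xi>t"
    and \<xi>t_sol: "H \<xi>t = - (k / lam\<^sup>2) * (Gamma (1 - \<alpha> / 2) / Gamma (1 + \<alpha> / 2)) * (C - B)"
    and \<xi>t_uniq: "\<And>\<xi>. 0 < \<xi> \<Longrightarrow>
          H \<xi> = - (k / lam\<^sup>2) * (Gamma (1 - \<alpha> / 2) / Gamma (1 + \<alpha> / 2)) * (C - B) \<Longrightarrow> \<xi> = \<xi>t"
    and u1_def: "\<And>x t. u1 x t = B + (C - B) / (1 - Wright (- \<xi>t) (- \<alpha> / 2) 1) *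
          (1 - Wright (- (x / (lam * t powr (\<alpha> / 2)))) (- \<alpha> / 2) 1)"
    and s1_def: "\<And>t. s1 t = lam * \<xi>t * t powr (\<alpha> / 2)"
    and u3_def: "\<And>x t. u3 x t = D - (D - C) *
          (1 - Wright (- (x / (lam * t powr (\<alpha> / 2)))) (- \<alpha> / 2) 1
             + m / (h * lam * Gamma (1 - \<alpha> / 2)))
          / (1 - Wright (- \<eta>t) (- \<alpha> / 2) 1 + m / (h * lam * Gamma (1 - \<alpha> / 2)))"
    and s3_def: "\<And>t. s3 t = lam * \<eta>t * t powr (\<alpha> / 2)"
  shows "\<xi>t = \<eta>t \<and> (\<forall>t>0. s1 t = s3 t) \<and> (\<forall>x t. 0 < t \<longrightarrow> u1 x t = u3 x t)"
proof -
  define P where "P = m / (h * lam * Gamma (1 - \<alpha> / 2))"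
  define c where "c = k / lam\<^sup>2 * (Gamma (1 - \<alpha> / 2) / Gamma (1 + \<alpha> / 2))"
  define A where "A = 1 - Wright (- \<eta>t) (- \<alpha> / 2) 1"
  define M where "M = Mainardi (\<alpha> / 2) \<eta>t"
  have g1: "Gamma (1 - \<alpha> / 2) > 0" using assms(2) by (intro Gamma_real_pos) simp
  have g2: "Gamma (1 + \<alpha> / 2) > 0" using assms(1) by (intro Gamma_real_pos) simp
  have P0: "P > 0" unfolding P_def using g1 assms(1-8) by simp
  have c0: "c > 0" unfolding c_def using g1 g2 assms(1-8) by simp
  have "Wright (- \<eta>t) (- (\<alpha>/2)) 1 < 1"
    by (rule wright_lt_one) (use assms(1-8) \<eta>t_pos in auto)
  then have A0: "A > 0" unfolding A_def by simp
  have AP: "A + P > 0" using A0 P0 by simp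
  have Ksol: "\<eta>t * (A + P) * (1 / M) = c * (D - C)"
    using \<eta>t_sol K_def[of \<eta>t] unfolding A_def P_def M_def c_def by simp
  have cDC: "c * (D - C) > 0" using c0 assms(1-8) by simp
  have M0: "M \<noteq> 0" using Ksol cDC by auto
  have B': "B = D - (D - C) * P / (A + P)" unfolding B_def P_def A_def by simp
  have CB: "C - B = - (D - C) * A / (A + P)" unfolding B' using AP by (simp add: field_simps)
  have "H \<eta>t = - c * (C - B)"
  proof -
    have "H \<eta>t = \<eta>t * A * (1 / M)" using H_def[of \<eta>t] unfolding A_def M_def by simp
    also have "\<dots> = (\<eta>t * A * (1 / M)) * (A + P) / (A + P)" using AP by simp
    also have "\<dots> = (\<eta>t * (A + P) * (1 / M)) * A / (A + P)" by (simp add: ac_simps)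
    also have "\<dots> = c * (D - C) * A / (A + P)" by (simp only: Ksol)
    also have "\<dots> = - c * (C - B)" unfolding CB using AP by (simp add: field_simps)
    finally show ?thesis .
  qed
  then have eq: "\<eta>t = \<xi>t" using \<xi>t_uniq[OF \<eta>t_pos] unfolding c_def by simp
  show ?thesis
  proof (intro conjI allI impI)
    show "\<xi>t = \<eta>t" using eq by simp
    fix t :: real assume "0 < t"
    show "s1 t = s3 t" using eq by (simp add: s1_def s3_def)
  next
    fix x t :: real assume "0 < t"
    define Wx where "Wx = Wright (- (x / (lam * t powr (\<alpha> / 2)))) (- \<alpha> / 2) 1"
    have "u1 x t = B + (C - B) / A * (1 - Wx)"
      using u1_def[of x t] eq unfolding A_def Wx_def by simp
    also have "\<dots> = D - (D - C) * (1 - Wx + P) / (A + P)"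
    proof -
      have APn: "A + P \<noteq> 0" using AP by simp
      have q: "(C - B) / A = - (D - C) / (A + P)" unfolding CB using A0 by simp
      have "B + (C - B) / A * (1 - Wx) = D - (D - C) * P / (A + P) + (- (D - C) / (A + P)) * (1 - Wx)"
        by (simp only: q) (simp add: B')
      also have "\<dots> = D - (D - C) * (1 - Wx + P) / (A + P)"
        by (rule aux_alg[OF APn])
      finally show ?thesis .
    qed
    also have "\<dots> = u3 x t"
      using u3_def[of x t] unfolding A_def Wx_def P_def by simp
    finally show "u1 x t = u3 x t" .
  qed
qed

end
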